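(* Under the setup in the context, for every $\delta>0$, the event $$\mathcal E=\bigcup_{j=1}^{K}\bigcup_{i=1}^{\infty}\bigl\{|\tilde\mu_{j,i}-\mu_j|>U(i,\delta)\bigr\}$$ satisfies $\mathbb P(\mathcal E)\le\delta$.
   Context: There are $K$ arms. For each arm $j\in[K]=\{1,\dots,K\}$, the rewards $r_{j,1},r_{j,2},\dots$ are i.i.d. real random variables with values in a fixed interval $[a,b]$ and mean $\mu_j$, and they are $\sigma^2$-subgaussian in the sense that $\mathbb P(|r_{j,k}-\mu_j|>t)\le 2e^{-t^2/(2\sigma^2)}$ for all $t>0$; moreover empirical means satisfy $\mathbb P(|\frac1n\sum_{k=1}^n r_{j,k}-\mu_j|>t)\le 2e^{-nt^2/(2\sigma^2)}$ for all $n\ge1,t>0$. Rewards of different arms are independent. Fix integers $B\ge 1$ and $\alpha\ge 2$, and set $t_i=\alpha^i$ for $i\ge1$. For $\delta>0$ and $i\ge 1$ define $$U'(i,\delta)=\sigma\sqrt{\frac{2\log(4Kt_i^2/\delta)}{t_i}},$$ and define $U(i,\delta)$ recursively by $U(0,\delta)=b-a$ and $$U(i,\delta)=\frac{1}{2^B}\bigl[U'(i,\delta)+U(i-1,\delta)\bigr]+U'(i,\delta)\quad(i\ge1).$$ Let $\hat\mu_{j,i}=\frac1{t_i}\sum_{k=1}^{t_i}r_{j,k}$. Quantizer: for a real interval $[\ell,u]$, divide it into $2^B$ consecutive bins of equal width $(u-\ell)/2^B$; for any $x\in\mathbb R$, $Q_{[\ell,u]}(x)$ denotes the midpoint of a bin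 whose midpoint is nearest to $x$. Decoded estimates: $\tilde\mu_{j,0}$ is drawn uniformly from $[a,b]$, and for $i\ge1$, $$\tilde\mu_{j,i}=Q_{I_{j,i}}(\hat\mu_{j,i}),\qquad I_{j,i}=\bigl[\tilde\mu_{j,i-1}-U(i-1,\delta)-U'(i,\delta),\ \tilde\mu_{j,i-1}+U(i-1,\delta)+U'(i,\delta)\bigr].$$ *)

theory Defs
  imports "HOL-Probability.Probability"
begin

text \<open>Quantizer: the interval [l,u] is split into 2^B bins of equal width;
  quant l u B x is the midpoint of a bin whose midpoint is nearest to x
  (ties resolved by ARG_MIN, i.e. some nearest bin).\<close>

definition bin_mid :: "real \<Rightarrow> real \<Rightarrow> nat \<Rightarrow> nat \<Rightarrow> real" where
  "bin_mid l u B k = l + (real k + 1/2) * ((u - l) / 2 ^ B)"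

definition quant :: "real \<Rightarrow> real \<Rightarrow> nat \<Rightarrow> real \<Rightarrow> real" where
  "quant l u B x = bin_mid l u B (ARG_MIN (\<lambda>k. \<bar>x - bin_mid l u B k\<bar>) k. k < 2 ^ B)"

definition tlen :: "nat \<Rightarrow> nat \<Rightarrow> nat" where
  "tlen \<alpha> i = \<alpha> ^ i"

definition Uprime :: "real \<Rightarrow> nat \<Rightarrow> nat \<Rightarrow> real \<Rightarrow> nat \<Rightarrow> real" where
  "Uprime \<sigma> K \<alpha> \<delta> i =
     \<sigma> * sqrt (2 * ln (4 * real K * real (tlen \<alpha> i) ^ 2 / \<delta>) / real (tlen \<alpha> i))"

primrec Ufun :: "real \<Rightarrow> nat \<Rightarrow> nat \<Rightarrow> nat \<Rightarrow> real \<Rightarrow> real \<Rightarrow> real \<Rightarrow> nat \<Rightarrow> real" where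
  "Ufun \<sigma> K \<alpha> B a b \<delta> 0 = b - a"
| "Ufun \<sigma> K \<alpha> B a b \<delta> (Suc i) =
     (Uprime \<sigma> K \<alpha> \<delta> (Suc i) + Ufun \<sigma> K \<alpha> B a b \<delta> i) / 2 ^ B + Uprime \<sigma> K \<alpha> \<delta> (Suc i)"

definition emp_mean :: "nat \<Rightarrow> (nat \<Rightarrow> real) \<Rightarrow> nat \<Rightarrow> real" where
  "emp_mean \<alpha> r i = (\<Sum>k = 1..tlen \<alpha> i. r k) / real (tlen \<alpha> i)"

text \<open>Decoded estimates: dec ... x0 r i, where x0 is the initial uniform draw
  tilde mu_{j,0} and r the reward sequence of the arm.\<close>
primrec dec :: "real \<Rightarrow> nat \<Rightarrow> nat \<Rightarrow> nat \<Rightarrow> real \<Rightarrow> real \<Rightarrow> real \<Rightarrow> real \<Rightarrow> (nat \<Rightarrow> real) \<Rightarrow> nat \<Rightarrow> real" where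
  "dec \<sigma> K \<alpha> B a b \<delta> x0 r 0 = x0"
| "dec \<sigma> K \<alpha> B a b \<delta> x0 r (Suc i) =
     (let c = dec \<sigma> K \<alpha> B a b \<delta> x0 r i;
          w = Ufun \<sigma> K \<alpha> B a b \<delta> i + Uprime \<sigma> K \<alpha> \<delta> (Suc i)
      in quant (c - w) (c + w) B (emp_mean \<alpha> r (Suc i)))"

end

theory Submission
  imports Defs
begin

lemma exists_close_mid:
  fixes l u x :: real
  assumes "l \<le> x" "x \<le> u"
  shows "\<exists>k. k < (2::nat) ^ B \<and> \<bar>x - bin_mid l u B k\<bar> \<le> ((u - l) / 2 ^ B) / 2"
proof -
  define h where "h = (u - l) / 2 ^ B"
  have h0: "h \<ge> 0" using assms by (simp add: h_def)
  show ?thesis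
  proof (cases "h = 0")
    case True
    then have "u = l" by (simp add: h_def)
    then show ?thesis using assms by (intro exI[of _ 0]) (simp add: bin_mid_def)
  next
    case False
    then have hp: "h > 0" using h0 by simp
    define s where "s = (x - l) / h"
    have s0: "s \<ge> 0" using assms hp by (simp add: s_def)
    have "x - l \<le> u - l" using assms by simp
    also have "u - l = h * 2 ^ B" by (simp add: h_def)
    finally have sB: "s \<le> 2 ^ B" using hp by (simp add: s_def field_simps)
    have xs: "x = l + s * h" using hp by (simp add: s_def)
    define k0 where "k0 = nat \<lfloor>s\<rfloor>"
    have k0: "real k0 \<le> s" "s < real k0 + 1" using s0 by (simp_all add: k0_def)
    show ?thesis
    proof (cases "k0 < 2 ^ B")
      case True
      have e: "x - bin_mid l u B k0 = h * (s - real k0 - 1/2)"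
        unfolding bin_mid_def h_def[symmetric] xs by (simp add: algebra_simps)
      have "\<bar>x - bin_mid l u B k0\<bar> = h * \<bar>s - real k0 - 1/2\<bar>"
        unfolding e using hp by (simp add: abs_mult)
      also have "\<dots> \<le> h * (1/2)" proof (rule mult_left_mono) show "\<bar>s - real k0 - 1/2\<bar> \<le> 1/2" using k0 unfolding abs_le_iff by linarith qed (use hp in simp)
      finally show ?thesis using True by (intro exI[of _ k0]) (simp add: h_def)
    next
      case False
      then have "real k0 \<ge> 2 ^ B" by (metis not_less of_nat_le_iff of_nat_numeral of_nat_power)
      then have ss: "s = 2 ^ B" using k0 sB by linarith
      have pos: "(2::nat) ^ B \<ge> 1" by simp
      have e: "x - bin_mid l u B (2 ^ B - 1) = h * (s - real (2 ^ B - 1::nat) - 1/2)"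
        unfolding bin_mid_def h_def[symmetric] xs by (simp add: algebra_simps)
      have "\<bar>x - bin_mid l u B (2 ^ B - 1)\<bar> = h * \<bar>s - real (2 ^ B - 1::nat) - 1/2\<bar>"
        unfolding e using hp by (simp add: abs_mult)
      also have "real (2 ^ B - 1::nat) = 2 ^ B - 1" using pos by (simp add: of_nat_diff)
      finally show ?thesis using ss by (intro exI[of _ "2 ^ B - 1"]) (simp add: h_def)
    qed
  qed
qed

lemma quant_close:
  fixes l u x :: real
  assumes "l \<le> x" "x \<le> u"
  shows "\<bar>quant l u B x - x\<bar> \<le> ((u - l) / 2 ^ B) / 2"
proof -
  obtain k where k: "k < (2::nat) ^ B" "\<bar>x - bin_mid l u B k\<bar> \<le> ((u - l) / 2 ^ B) / 2"
    using exists_close_mid[OF assms] by blast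
  define f where "f = (\<lambda>k. \<bar>x - bin_mid l u B k\<bar>)"
  have "\<not>(\<exists>y\<in>{k. k < (2::nat) ^ B}. f y < f (arg_min_on f {k. k < (2::nat) ^ B}))"
    by (rule arg_min_if_finite(2)) (auto intro: exI[of _ 0])
  then have "\<not> f k < f (arg_min f (\<lambda>k. k < (2::nat) ^ B))"
    using k(1) unfolding arg_min_on_def by auto
  then have "\<bar>x - quant l u B x\<bar> \<le> \<bar>x - bin_mid l u B k\<bar>"
    unfolding quant_def f_def by simp
  then show ?thesis using k by linarith
qed

lemma dec_good:
  assumes ab: "a < b"
    and emp: "\<And>i. i \<ge> 1 \<Longrightarrow> \<bar>emp_mean \<alpha> r i - m\<bar> \<le> Uprime \<sigma> K \<alpha> \<delta> i"
    and Upos: "\<And>i. Uprime \<sigma> K \<alpha> \<delta> i \<ge> 0"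
    and x0: "\<bar>x0 - m\<bar> \<le> b - a"
  shows "\<bar>dec \<sigma> K \<alpha> B a b \<delta> x0 r i - m\<bar> \<le> Ufun \<sigma> K \<alpha> B a b \<delta> i \<and> Ufun \<sigma> K \<alpha> B a b \<delta> i \<ge> 0"
proof (induction i)
  case 0
  then show ?case using x0 ab by simp
next
  case (Suc i)
  define c where "c = dec \<sigma> K \<alpha> B a b \<delta> x0 r i"
  define w where "w = Ufun \<sigma> K \<alpha> B a b \<delta> i + Uprime \<sigma> K \<alpha> \<delta> (Suc i)"
  define x where "x = emp_mean \<alpha> r (Suc i)"
  have w0: "w \<ge> 0" using Suc Upos[of "Suc i"] by (simp add: w_def)
  have ex: "\<bar>x - m\<bar> \<le> Uprime \<sigma> K \<alpha> \<delta> (Suc i)" using emp[of "Suc i"] by (simp add: x_def)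
  have cm: "\<bar>c - m\<bar> \<le> Ufun \<sigma> K \<alpha> B a b \<delta> i" using Suc by (simp add: c_def)
  have "c - w \<le> x" "x \<le> c + w" using ex cm unfolding w_def by linarith+
  from quant_close[OF this, of B]
  have q: "\<bar>quant (c - w) (c + w) B x - x\<bar> \<le> w / 2 ^ B" by simp
  have d: "dec \<sigma> K \<alpha> B a b \<delta> x0 r (Suc i) = quant (c - w) (c + w) B x"
    by (simp add: c_def w_def x_def Let_def)
  have U: "Ufun \<sigma> K \<alpha> B a b \<delta> (Suc i) = w / 2 ^ B + Uprime \<sigma> K \<alpha> \<delta> (Suc i)"
    by (simp add: w_def)
  show ?case unfolding d U using q ex w0 Upos[of "Suc i"] by (auto simp: abs_le_iff)
qed
theorem lemma2:
  fixes M :: "'w measure"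
    and K B \<alpha> :: nat
    and a b \<sigma> \<delta> :: real
    and r :: "nat \<Rightarrow> nat \<Rightarrow> 'w \<Rightarrow> real"
    and \<mu> :: "nat \<Rightarrow> real"
    and x0 :: "nat \<Rightarrow> 'w \<Rightarrow> real"
  assumes P: "prob_space M"
    and K: "K \<ge> 1" and B: "B \<ge> 1" and \<alpha>: "\<alpha> \<ge> 2"
    and ab: "a < b" and \<sigma>: "\<sigma> > 0" and \<delta>: "\<delta> > 0"
    and rv: "\<And>j k. j \<in> {1..K} \<Longrightarrow> k \<ge> 1 \<Longrightarrow> r j k \<in> borel_measurable M"
    and range: "\<And>j k \<omega>. j \<in> {1..K} \<Longrightarrow> k \<ge> 1 \<Longrightarrow> \<omega> \<in> space M \<Longrightarrow> r j k \<omega> \<in> {a..b}"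
    and indep: "prob_space.indep_vars M (\<lambda>_. borel) (\<lambda>(j, k). r j k) ({1..K} \<times> {1..})"
    and ident: "\<And>j k. j \<in> {1..K} \<Longrightarrow> k \<ge> 1 \<Longrightarrow> distr M borel (r j k) = distr M borel (r j 1)"
    and mean: "\<And>j k. j \<in> {1..K} \<Longrightarrow> k \<ge> 1 \<Longrightarrow> prob_space.expectation M (r j k) = \<mu> j"
    and subg: "\<And>j k t. j \<in> {1..K} \<Longrightarrow> k \<ge> 1 \<Longrightarrow> t > 0 \<Longrightarrow>
        measure M {\<omega> \<in> space M. \<bar>r j k \<omega> - \<mu> j\<bar> > t} \<le> 2 * exp (- (t ^ 2) / (2 * \<sigma> ^ 2))"
    and subg_mean: "\<And>j n t. j \<in> {1..K} \<Longrightarrow> n \<ge> 1 \<Longrightarrow> t > 0 \<Longrightarrow>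
        measure M {\<omega> \<in> space M. \<bar>(\<Sum>k = 1..n. r j k \<omega>) / real n - \<mu> j\<bar> > t}
          \<le> 2 * exp (- (real n * t ^ 2) / (2 * \<sigma> ^ 2))"
    and x0_rv: "\<And>j. j \<in> {1..K} \<Longrightarrow> x0 j \<in> borel_measurable M"
    and x0_unif: "\<And>j. j \<in> {1..K} \<Longrightarrow> distr M lborel (x0 j) = uniform_measure lborel {a..b}"
  shows "measure M {\<omega> \<in> space M. \<exists>j \<in> {1..K}. \<exists>i \<ge> 1.
            \<bar>dec \<sigma> K \<alpha> B a b \<delta> (x0 j \<omega>) (\<lambda>k. r j k \<omega>) i - \<mu> j\<bar> > Ufun \<sigma> K \<alpha> B a b \<delta> i}
         \<le> \<delta>"
proof -
  interpret prob_space M by (rule P)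
  let ?bad = "{\<omega> \<in> space M. \<exists>j \<in> {1..K}. \<exists>i \<ge> 1.
            \<bar>dec \<sigma> K \<alpha> B a b \<delta> (x0 j \<omega>) (\<lambda>k. r j k \<omega>) i - \<mu> j\<bar> > Ufun \<sigma> K \<alpha> B a b \<delta> i}"
  show ?thesis
  proof (cases "\<delta> \<ge> 1")
    case True
    then show ?thesis using prob_le_1[of ?bad] by linarith
  next
    case False
    then have d1: "\<delta> < 1" by simp
    define Up where "Up i = Uprime \<sigma> K \<alpha> \<delta> i" for i
    define n where "n i = real (tlen \<alpha> i)" for i
    define X where "X i = 4 * real K * n i ^ 2 / \<delta>" for i
    have n1: "n i \<ge> 2 ^ i" for i
    proof -
      have "(2::real) ^ i \<le> real \<alpha> ^ i" using \<alpha> by (intro power_mono) auto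
      then show ?thesis by (simp add: n_def tlen_def)
    qed
    have n1': "n i \<ge> 1" for i using n1[of i] one_le_power[of "2::real" i] by linarith
    have X1: "X i > 1" for i
    proof -
      have "n i ^ 2 \<ge> 1" using n1' by simp
      moreover have "real K \<ge> 1" using K by simp
      ultimately have "real K * n i ^ 2 \<ge> 1 * 1" by (intro mult_mono) auto
      then have "4 * real K * n i ^ 2 \<ge> 4" by simp
      then have "4 * real K * n i ^ 2 > \<delta>" using d1 by linarith
      then show ?thesis using \<delta> by (simp add: X_def)
    qed
    have Up_eq: "Up i = \<sigma> * sqrt (2 * ln (X i) / n i)" for i
      by (simp add: Up_def Uprime_def X_def n_def)
    have Up_pos: "Up i > 0" for i
      unfolding Up_eq using X1[of i] n1'[of i] \<sigma> by simp
    have Up_sq: "n i * Up i ^ 2 / (2 * \<sigma> ^ 2) = ln (X i)" for i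
    proof -
      have "Up i ^ 2 = \<sigma>^2 * (2 * ln (X i) / n i)"
        unfolding Up_eq power_mult_distrib using X1[of i] n1'[of i] by simp
      then show ?thesis using \<sigma> n1'[of i] by (simp add: field_simps)
    qed
    have mu_ab: "\<mu> j \<in> {a..b}" if j: "j \<in> {1..K}" for j
    proof -
      have int: "integrable M (r j 1)"
        by (rule integrable_const_bound[where B="\<bar>a\<bar> + \<bar>b\<bar>"])
           (use range[OF j, of 1] rv[OF j, of 1] in \<open>auto intro!: AE_I2 simp: abs_le_iff dest!: range[OF j, of 1]\<close>, (smt (verit))+)
      have "a \<le> expectation (r j 1)"
        by (rule integral_ge_const[OF int]) (use range[OF j, of 1] in \<open>auto intro!: AE_I2\<close>)
      moreover have "expectation (r j 1) \<le> b"
        by (rule integral_le_const[OF int]) (use range[OF j, of 1] in \<open>auto intro!: AE_I2\<close>)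
      ultimately show ?thesis using mean[OF j, of 1] by simp
    qed
    define E where "E j i = {\<omega> \<in> space M. \<bar>(\<Sum>k = 1..tlen \<alpha> i. r j k \<omega>) / real (tlen \<alpha> i) - \<mu> j\<bar> > Up i}" for j i
    define N where "N j = {\<omega> \<in> space M. x0 j \<omega> \<notin> {a..b}}" for j
    define F where "F i = (\<Union>j\<in>{1..K}. E j (Suc i))" for i
    have E_meas: "E j i \<in> sets M" if j: "j \<in> {1..K}" for j i
    proof -
      have [measurable]: "(\<lambda>\<omega>. \<Sum>k = 1..tlen \<alpha> i. r j k \<omega>) \<in> borel_measurable M"
        by (rule borel_measurable_sum) (use rv[OF j] in auto)
      show ?thesis unfolding E_def by measurable
    qed
    have N_meas: "N j \<in> sets M" and N0: "measure M (N j) = 0" if j: "j \<in> {1..K}" for j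
    proof -
      have xm: "x0 j \<in> M \<rightarrow>\<^sub>M lborel" using x0_rv[OF j] by simp
      have eq: "N j = x0 j -` (- {a..b}) \<inter> space M" by (auto simp: N_def)
      show "N j \<in> sets M" unfolding eq by (rule measurable_sets[OF xm]) auto
      have "measure M (N j) = measure (distr M lborel (x0 j)) (- {a..b})"
        unfolding eq by (rule measure_distr[symmetric, OF xm]) auto
      also have "\<dots> = measure (uniform_measure lborel {a..b}) (- {a..b})"
        using x0_unif[OF j] by simp
      also have "\<dots> = 0"
        unfolding measure_def by (subst emeasure_uniform_measure) auto
      finally show "measure M (N j) = 0" .
    qed
    have E_bound: "measure M (E j i) \<le> \<delta> / (2 * real K * n i ^ 2)" if j: "j \<in> {1..K}" for j i
    proof -
      have "measure M (E j i) \<le> 2 * exp (- (n i * Up i ^ 2) / (2 * \<sigma> ^ 2))"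
        unfolding E_def n_def using subg_mean[OF j, of "tlen \<alpha> i" "Up i"] Up_pos[of i] \<alpha>
        by (simp add: tlen_def)
      also have "- (n i * Up i ^ 2) / (2 * \<sigma> ^ 2) = - ln (X i)"
        using Up_sq[of i] by (simp add: minus_divide_left)
      also have "2 * exp (- ln (X i)) = 2 / X i"
        using X1[of i] by (simp add: exp_minus divide_inverse)
      also have "\<dots> = \<delta> / (2 * real K * n i ^ 2)"
        using K n1'[of i] \<delta> by (simp add: X_def field_simps)
      finally show ?thesis .
    qed
    have F_meas: "F i \<in> sets M" for i unfolding F_def using E_meas by auto
    have F_bound: "measure M (F i) \<le> \<delta> / 2 * (1/2) ^ Suc i" for i
    proof -
      have "measure M (F i) \<le> (\<Sum>j\<in>{1..K}. measure M (E j (Suc i)))"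
        unfolding F_def by (rule measure_UNION_le) (use E_meas in auto)
      also have "\<dots> \<le> (\<Sum>j\<in>{1..K}. \<delta> / (2 * real K * n (Suc i) ^ 2))"
        by (rule sum_mono) (rule E_bound)
      also have "\<dots> = \<delta> / (2 * n (Suc i) ^ 2)" using K by simp
      also have "\<dots> \<le> \<delta> / 2 * (1/2) ^ Suc i"
      proof -
        have "n (Suc i) * n (Suc i) \<ge> n (Suc i) * 1"
          using n1'[of "Suc i"] by (intro mult_left_mono) auto
        then have "n (Suc i) ^ 2 \<ge> 2 ^ Suc i"
          using n1[of "Suc i"] by (simp add: power2_eq_square)
        moreover have "(0::real) < 2 ^ Suc i" by simp
        ultimately have "1 / n (Suc i) ^ 2 \<le> 1 / 2 ^ Suc i"
          using n1'[of "Suc i"] by (intro divide_left_mono) (auto intro!: mult_pos_pos)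
        then have "\<delta> / 2 * (1 / n (Suc i) ^ 2) \<le> \<delta> / 2 * (1 / 2 ^ Suc i)"
          using \<delta> by (intro mult_left_mono) auto
        then show ?thesis by (simp add: power_one_over)
      qed
      finally show ?thesis .
    qed
    have geo: "(\<lambda>i. \<delta> / 2 * (1/2) ^ Suc i) sums (\<delta> / 2 * 1)"
      by (rule sums_mult[OF power_half_series])
    have sumF: "summable (\<lambda>i. measure M (F i))"
      by (rule summable_comparison_test'[OF sums_summable[OF geo]]) (use F_bound in auto)
    have UF: "measure M (\<Union>i. F i) \<le> \<delta> / 2"
    proof -
      have "measure M (\<Union>i. F i) \<le> (\<Sum>i. measure M (F i))"
        by (rule finite_measure_subadditive_countably) (use F_meas sumF in auto)
      also have "\<dots> \<le> (\<Sum>i. \<delta> / 2 * (1/2) ^ Suc i)"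
        by (rule suminf_le[OF F_bound sumF sums_summable[OF geo]])
      also have "\<dots> = \<delta> / 2" using geo sums_unique by fastforce
      finally show ?thesis .
    qed
    have UN: "measure M (\<Union>j\<in>{1..K}. N j) \<le> 0"
    proof -
      have "measure M (\<Union>j\<in>{1..K}. N j) \<le> (\<Sum>j\<in>{1..K}. measure M (N j))"
        by (rule measure_UNION_le) (use N_meas in auto)
      also have "\<dots> = 0" using N0 by simp
      finally show ?thesis .
    qed
    have sub: "?bad \<subseteq> (\<Union>j\<in>{1..K}. N j) \<union> (\<Union>i. F i)"
    proof
      fix \<omega> assume w: "\<omega> \<in> ?bad"
      then obtain j i where j: "j \<in> {1..K}" and i: "i \<ge> 1" and
        bad: "\<bar>dec \<sigma> K \<alpha> B a b \<delta> (x0 j \<omega>) (\<lambda>k. r j k \<omega>) i - \<mu> j\<bar> > Ufun \<sigma> K \<alpha> B a b \<delta> i"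
        and ws: "\<omega> \<in> space M" by blast
      show "\<omega> \<in> (\<Union>j\<in>{1..K}. N j) \<union> (\<Union>i. F i)"
      proof (rule ccontr)
        assume nin: "\<omega> \<notin> (\<Union>j\<in>{1..K}. N j) \<union> (\<Union>i. F i)"
        then have x0ab: "x0 j \<omega> \<in> {a..b}" using j ws by (auto simp: N_def)
        have emp: "\<bar>emp_mean \<alpha> (\<lambda>k. r j k \<omega>) i' - \<mu> j\<bar> \<le> Uprime \<sigma> K \<alpha> \<delta> i'" if i1: "i' \<ge> 1" for i'
        proof -
          obtain i0 where i0: "i' = Suc i0" using i1 by (cases "i'") auto
          have "\<omega> \<notin> E j i'" using nin j unfolding F_def i0 by blast
          then show ?thesis using ws by (simp add: E_def emp_mean_def Up_def not_less)
        qed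
        have "\<bar>x0 j \<omega> - \<mu> j\<bar> \<le> b - a" using x0ab mu_ab[OF j] by (auto simp: abs_le_iff)
        from dec_good[OF ab emp _ this, of B i] Up_pos
        have "\<bar>dec \<sigma> K \<alpha> B a b \<delta> (x0 j \<omega>) (\<lambda>k. r j k \<omega>) i - \<mu> j\<bar> \<le> Ufun \<sigma> K \<alpha> B a b \<delta> i"
          unfolding Up_def by (meson less_imp_le)
        then show False using bad by simp
      qed
    qed
    have "measure M ?bad \<le> measure M ((\<Union>j\<in>{1..K}. N j) \<union> (\<Union>i. F i))"
      by (rule finite_measure_mono[OF sub]) (use N_meas F_meas in auto)
    also have "\<dots> \<le> measure M (\<Union>j\<in>{1..K}. N j) + measure M (\<Union>i. F i)"
      by (rule measure_Un_le) (use N_meas F_meas in auto)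
    also have "\<dots> \<le> \<delta>" using UN UF \<delta> by linarith
    finally show ?thesis .
  qed
qed

end
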